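(* Let $F$ be a field with $\mathrm{char}\,F\neq 2$, let $n\ge 1$, and let $\lambda\in F$ be nonzero. Let $I_n$ be the $F$-algebra defined in the context. Then every Rota--Baxter operator $R$ of weight $\lambda$ on $I_n$ is splitting: there exist subalgebras $A_1,A_2$ of $I_n$ with $I_n=A_1\oplus A_2$ as vector spaces such that $R(a_1+a_2)=-\lambda a_2$ for all $a_1\in A_1$, $a_2\in A_2$.
   Context: $I_n$ denotes the $n$-dimensional (non-associative) algebra over $F$ with basis $e_1,\ldots,e_n$ and multiplication given by $e_n\cdot e_n=2e_n$, $e_n\cdot e_j=e_j$, $e_j\cdot e_j=e_n$ for $j=1,\ldots,n-1$, with all other products of basis elements equal to zero (extended bilinearly). A linear operator $R\colon A\to A$ on an algebra $A$ is a Rota--Baxter operator of weight $\lambda\in F$ if $R(x)R(y)=R(R(x)y+xR(y)+\lambda xy)$ for all $x,y\in A$. *)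

theory Defs
  imports Main
begin

text \<open>Elements of I_n are coordinate vectors x :: nat => 'a, where x i is the
coefficient of the basis vector e_i (i in {1..n}); coordinates outside {1..n} are 0.\<close>

definition In_carrier :: "nat \<Rightarrow> (nat \<Rightarrow> 'a::field) set" where
  "In_carrier n = {x. \<forall>i. i \<notin> {1..n} \<longrightarrow> x i = 0}"

definition vadd :: "(nat \<Rightarrow> 'a::field) \<Rightarrow> (nat \<Rightarrow> 'a) \<Rightarrow> (nat \<Rightarrow> 'a)" where
  "vadd x y = (\<lambda>k. x k + y k)"

definition vscale :: "'a::field \<Rightarrow> (nat \<Rightarrow> 'a) \<Rightarrow> (nat \<Rightarrow> 'a)" where
  "vscale c x = (\<lambda>k. c * x k)"

definition vzero :: "nat \<Rightarrow> 'a::field" where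
  "vzero = (\<lambda>k. 0)"

text \<open>Structure constants: coefficient of e_k in e_i * e_j.
  e_n e_n = 2 e_n, e_n e_j = e_j, e_j e_j = e_n (j < n), all others zero.\<close>

definition In_sc :: "nat \<Rightarrow> nat \<Rightarrow> nat \<Rightarrow> nat \<Rightarrow> 'a::field" where
  "In_sc n i j k =
     (if i = n \<and> j = n then (if k = n then 2 else 0)
      else if i = n \<and> j < n then (if k = j then 1 else 0)
      else if i = j \<and> j < n then (if k = n then 1 else 0)
      else 0)"

definition In_mult :: "nat \<Rightarrow> (nat \<Rightarrow> 'a::field) \<Rightarrow> (nat \<Rightarrow> 'a) \<Rightarrow> (nat \<Rightarrow> 'a)" where
  "In_mult n x y = (\<lambda>k. if k \<in> {1..n} then
      (\<Sum>i\<in>{1..n}. \<Sum>j\<in>{1..n}. x i * y j * In_sc n i j k) else 0)"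

definition is_linear_op :: "nat \<Rightarrow> ((nat \<Rightarrow> 'a::field) \<Rightarrow> (nat \<Rightarrow> 'a)) \<Rightarrow> bool" where
  "is_linear_op n R \<longleftrightarrow>
     (\<forall>x\<in>In_carrier n. R x \<in> In_carrier n) \<and>
     (\<forall>x\<in>In_carrier n. \<forall>y\<in>In_carrier n. R (vadd x y) = vadd (R x) (R y)) \<and>
     (\<forall>c. \<forall>x\<in>In_carrier n. R (vscale c x) = vscale c (R x))"

definition is_RB_op :: "nat \<Rightarrow> 'a::field \<Rightarrow> ((nat \<Rightarrow> 'a) \<Rightarrow> (nat \<Rightarrow> 'a)) \<Rightarrow> bool" where
  "is_RB_op n lam R \<longleftrightarrow> is_linear_op n R \<and>
     (\<forall>x\<in>In_carrier n. \<forall>y\<in>In_carrier n.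
        In_mult n (R x) (R y) =
        R (vadd (vadd (In_mult n (R x) y) (In_mult n x (R y))) (vscale lam (In_mult n x y))))"

definition is_subalgebra :: "nat \<Rightarrow> (nat \<Rightarrow> 'a::field) set \<Rightarrow> bool" where
  "is_subalgebra n A \<longleftrightarrow> A \<subseteq> In_carrier n \<and> vzero \<in> A \<and>
     (\<forall>x\<in>A. \<forall>y\<in>A. vadd x y \<in> A) \<and>
     (\<forall>c. \<forall>x\<in>A. vscale c x \<in> A) \<and>
     (\<forall>x\<in>A. \<forall>y\<in>A. In_mult n x y \<in> A)"

end

theory Submission
  imports Defs
begin

definition ipr :: "nat \<Rightarrow> (nat \<Rightarrow> 'a::field) \<Rightarrow> (nat \<Rightarrow> 'a) \<Rightarrow> 'a" where
  "ipr n x y = (\<Sum>j\<in>{1..<n}. x j * y j)"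

lemma In_mult_eq:
  assumes "n \<ge> 1"
  shows "In_mult n x y = (\<lambda>k. if 1 \<le> k \<and> k < n then x n * y k
            else if k = n then ipr n x y + 2 * x n * y n else (0::'a::field))"
proof (rule ext)
  fix k
  show "In_mult n x y k = (if 1 \<le> k \<and> k < n then x n * y k
            else if k = n then ipr n x y + 2 * x n * y n else 0)"
  proof (cases "1 \<le> k \<and> k < n")
    case True
    have inner: "(\<Sum>j\<in>{1..n}. x i * y j * In_sc n i j k) = (if i = n then x n * y k else 0)"
      if "i \<in> {1..n}" for i
    proof (cases "i = n")
      case True
      have "(\<Sum>j\<in>{1..n}. x i * y j * In_sc n i j k) = (\<Sum>j\<in>{1..n}. if j = k then x n * y k else 0)"
        using \<open>1 \<le> k \<and> k < n\<close> True by (intro sum.cong) (auto simp: In_sc_def)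
      also have "\<dots> = x n * y k" using \<open>1 \<le> k \<and> k < n\<close> by (simp add: sum.delta')
      finally show ?thesis using True by simp
    next
      case False
      then show ?thesis using \<open>1 \<le> k \<and> k < n\<close> that by (auto simp: In_sc_def intro!: sum.neutral)
    qed
    have "In_mult n x y k = (\<Sum>i\<in>{1..n}. if i = n then x n * y k else 0)"
      using True inner unfolding In_mult_def by (auto intro!: sum.cong)
    also have "\<dots> = x n * y k" using assms by (simp add: sum.delta')
    finally show ?thesis using True by simp
  next
    case False
    note F = False
    show ?thesis
    proof (cases "k = n")
      case True
      have inner: "(\<Sum>j\<in>{1..n}. x i * y j * In_sc n i j k) = (if i = n then 2 * x n * y n else x i * y i)"
        if "i \<in> {1..n}" for i
      proof (cases "i = n")
        case True
        have "(\<Sum>j\<in>{1..n}. x i * y j * In_sc n i j k) = (\<Sum>j\<in>{1..n}. if j = n then 2 * x n * y n else 0)"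
          using \<open>k = n\<close> True by (intro sum.cong) (auto simp: In_sc_def)
        also have "\<dots> = 2 * x n * y n" using assms by (simp add: sum.delta')
        finally show ?thesis using True by simp
      next
        case False
        have "(\<Sum>j\<in>{1..n}. x i * y j * In_sc n i j k) = (\<Sum>j\<in>{1..n}. if j = i then x i * y i else 0)"
          using \<open>k = n\<close> False that by (intro sum.cong) (auto simp: In_sc_def)
        also have "\<dots> = x i * y i" using that by (simp add: sum.delta')
        finally show ?thesis using False by simp
      qed
      have "In_mult n x y k = (\<Sum>i\<in>{1..n}. if i = n then 2 * x n * y n else x i * y i)"
        using True assms inner unfolding In_mult_def by (auto intro!: sum.cong)
      also have "\<dots> = 2 * x n * y n + (\<Sum>i\<in>{1..<n}. x i * y i)"
      proof -
        have e: "{1..n} = insert n {1..<n}" using assms by auto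
        have c: "(\<Sum>i\<in>{1..<n}. if i = n then 2 * x n * y n else x i * y i) = (\<Sum>i\<in>{1..<n}. x i * y i)"
          by (rule sum.cong) auto
        show ?thesis unfolding e using c by simp
      qed
      finally show ?thesis using True F by (simp add: ipr_def)
    next
      case False
      then show ?thesis using F unfolding In_mult_def by auto
    qed
  qed
qed

definition ee :: "nat \<Rightarrow> nat \<Rightarrow> 'a::field" where "ee j = (\<lambda>k. if k = j then 1 else 0)"
definition Pn :: "nat \<Rightarrow> (nat \<Rightarrow> 'a::field) \<Rightarrow> (nat \<Rightarrow> 'a)" where
  "Pn n x = (\<lambda>k. if k = n then 0 else x k)"

lemma ipr_sym: "ipr n x y = ipr n y x" unfolding ipr_def by (simp add: mult.commute)
lemma ipr_Pn: "ipr n (Pn n x) y = ipr n x y" unfolding ipr_def Pn_def by (intro sum.cong) auto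
lemma ipr_ee_n: "ipr n (ee n) y = 0" unfolding ipr_def ee_def by (intro sum.neutral) auto
lemma ipr_ee_n2: "ipr n y (ee n) = 0" unfolding ipr_def ee_def by (intro sum.neutral) auto
lemma ipr_ee: assumes "j \<in> {1..<n}" shows "ipr n (ee j) y = y j"
proof -
  have "ipr n (ee j) y = (\<Sum>i\<in>{1..<n}. if i = j then y j else 0)"
    unfolding ipr_def ee_def by (rule sum.cong) auto
  then show ?thesis using assms by simp
qed
lemma ipr_f1: "ipr n (\<lambda>k. if k = n then 1 else 0) y = 0" using ipr_ee_n unfolding ee_def .
lemma ipr_f2: "ipr n y (\<lambda>k. if k = n then 1 else 0) = 0" using ipr_ee_n2 unfolding ee_def .

lemma inC: "x \<in> In_carrier n \<Longrightarrow> \<not> (1 \<le> k \<and> k \<le> n) \<Longrightarrow> x k = 0"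
  unfolding In_carrier_def by auto
lemma inCI: "(\<And>k. \<not> (1 \<le> k \<and> k \<le> n) \<Longrightarrow> x k = 0) \<Longrightarrow> x \<in> In_carrier n"
  unfolding In_carrier_def by auto
lemma ee_C: "1 \<le> j \<Longrightarrow> j \<le> n \<Longrightarrow> ee j \<in> In_carrier n"
  by (rule inCI) (auto simp: ee_def)
lemma Pn_C: "x \<in> In_carrier n \<Longrightarrow> Pn n x \<in> In_carrier n"
  by (rule inCI) (auto simp: Pn_def inC)
lemma lc_C: "x \<in> In_carrier n \<Longrightarrow> y \<in> In_carrier n \<Longrightarrow> (\<lambda>k. a * x k + c * y k) \<in> In_carrier n"
  by (rule inCI) (auto simp: inC)
lemma sc_C: "x \<in> In_carrier n \<Longrightarrow> (\<lambda>k. a * x k) \<in> In_carrier n"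
  by (rule inCI) (auto simp: inC)
lemma mult_C: "In_mult n x y \<in> In_carrier n"
  by (rule inCI) (auto simp: In_mult_def)

locale RBI =
  fixes n :: nat and lam :: "'a::field" and R :: "(nat \<Rightarrow> 'a) \<Rightarrow> (nat \<Rightarrow> 'a)"
  assumes two: "(2::'a) \<noteq> 0" and n1: "n \<ge> 1" and lam: "lam \<noteq> 0" and RB: "is_RB_op n lam R"
begin

abbreviation "C \<equiv> In_carrier n"

lemma RC: "x \<in> C \<Longrightarrow> R x \<in> C" using RB unfolding is_RB_op_def is_linear_op_def by auto

lemma lin: assumes "x \<in> C" "y \<in> C"
  shows "R (\<lambda>k. a * x k + c * y k) = (\<lambda>k. a * R x k + c * R y k)"
proof -
  have "(\<lambda>k. a * x k + c * y k) = vadd (vscale a x) (vscale c y)" by (simp add: vadd_def vscale_def)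
  moreover have "vscale a x \<in> C" "vscale c y \<in> C" using assms sc_C unfolding vscale_def by auto
  ultimately show ?thesis using RB assms unfolding is_RB_op_def is_linear_op_def
    by (simp add: vadd_def vscale_def)
qed

lemma lin1: assumes "x \<in> C" shows "R (\<lambda>k. a * x k) = (\<lambda>k. a * R x k)"
  using RB assms unfolding is_RB_op_def is_linear_op_def by (simp add: vscale_def)

lemma lin3: assumes "x \<in> C" "y \<in> C" "z \<in> C"
  shows "R (\<lambda>k. a * x k + b * y k + c * z k) = (\<lambda>k. a * R x k + b * R y k + c * R z k)"
proof -
  have "R (\<lambda>k. a * x k + b * y k + c * z k) = R (\<lambda>k. 1 * (\<lambda>k. a * x k + b * y k) k + c * z k)" by simp
  also have "\<dots> = (\<lambda>k. 1 * R (\<lambda>k. a * x k + b * y k) k + c * R z k)"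
    by (rule lin) (use assms lc_C in auto)
  also have "\<dots> = (\<lambda>k. a * R x k + b * R y k + c * R z k)" using lin assms by simp
  finally show ?thesis .
qed

lemma Rzero: "R (\<lambda>k. 0) = (\<lambda>k. 0)"
proof -
  have z: "(\<lambda>k. 0::'a) \<in> C" by (rule inCI) auto
  show ?thesis using lin1[OF z, of 0] by simp
qed

lemma RBeq: "x \<in> C \<Longrightarrow> y \<in> C \<Longrightarrow> In_mult n (R x) (R y) =
   R (\<lambda>k. In_mult n (R x) y k + In_mult n x (R y) k + lam * In_mult n x y k)"
  using RB unfolding is_RB_op_def by (simp add: vadd_def vscale_def)

lemmas M = In_mult_eq[OF n1]

abbreviation "f \<equiv> ee n :: nat \<Rightarrow> 'a"
lemma fC: "f \<in> C" using ee_C n1 by auto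

lemma E4: "In_mult n (R f) (R f) = (\<lambda>k. R (Pn n (R f)) k + (4 * R f n + 2 * lam) * R f k)"
proof -
  have "(\<lambda>k. In_mult n (R f) f k + In_mult n f (R f) k + lam * In_mult n f f k)
     = (\<lambda>k. 1 * Pn n (R f) k + (4 * R f n + 2 * lam) * f k)"
    apply (rule ext)
    subgoal for k using RC[OF fC] inC[OF RC[OF fC], of k]
      by (cases "k = n"; cases "1 \<le> k \<and> k < n") (auto simp: M ipr_f1 ipr_f2 ee_def Pn_def)
    done
  then show ?thesis using RBeq[OF fC fC] lin[OF Pn_C[OF RC[OF fC]] fC, of 1 "4 * R f n + 2 * lam"] by simp
qed

lemma E3: assumes u: "u \<in> C" "u n = 0"
  shows "In_mult n (R u) (R f) = (\<lambda>k. (2 * R u n + ipr n u (R f)) * R f k)"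
proof -
  have "(\<lambda>k. In_mult n (R u) f k + In_mult n u (R f) k + lam * In_mult n u f k)
     = (\<lambda>k. (2 * R u n + ipr n u (R f)) * f k)"
    apply (rule ext)
    subgoal for k using u
      by (cases "k = n"; cases "1 \<le> k \<and> k < n") (auto simp: M ipr_f1 ipr_f2 ee_def)
    done
  then show ?thesis using RBeq[OF u(1) fC] lin1[OF fC] by simp
qed

lemma E2: assumes v: "v \<in> C" "v n = 0"
  shows "In_mult n (R f) (R v) = (\<lambda>k. (R f n + lam) * R v k + 1 * R (Pn n (R v)) k
           + (ipr n (R f) v + 2 * R v n) * R f k)"
proof -
  have "(\<lambda>k. In_mult n (R f) v k + In_mult n f (R v) k + lam * In_mult n f v k)
     = (\<lambda>k. (R f n + lam) * v k + 1 * Pn n (R v) k + (ipr n (R f) v + 2 * R v n) * f k)"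
    apply (rule ext)
    subgoal for k using v inC[OF v(1), of k] inC[OF RC[OF v(1)], of k]
      by (cases "k = n"; cases "1 \<le> k \<and> k < n") (auto simp: M ipr_f1 ipr_f2 ee_def Pn_def algebra_simps)
    done
  then show ?thesis using RBeq[OF fC v(1)] lin3[OF v(1) Pn_C[OF RC[OF v(1)]] fC,
     of "R f n + lam" 1 "ipr n (R f) v + 2 * R v n"] by simp
qed

lemma decomp: assumes "x \<in> C"
  shows "x = (\<lambda>k. 1 * Pn n x k + x n * f k)" "R x = (\<lambda>k. 1 * R (Pn n x) k + x n * R f k)"
proof -
  show e: "x = (\<lambda>k. 1 * Pn n x k + x n * f k)"
    by (rule ext) (simp add: Pn_def ee_def)
  have "R x = R (\<lambda>k. 1 * Pn n x k + x n * f k)" using e by simp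
  also have "\<dots> = (\<lambda>k. 1 * R (Pn n x) k + x n * R f k)" by (rule lin) (use assms Pn_C fC in auto)
  finally show "R x = (\<lambda>k. 1 * R (Pn n x) k + x n * R f k)" .
qed

lemma PnV: "x \<in> C \<Longrightarrow> Pn n x n = 0" by (simp add: Pn_def)

lemma K1: assumes v: "v \<in> C" "v n = 0"
  shows "R (R v) = (\<lambda>k. - lam * R v k)"
proof (rule ext)
  fix k
  have Rv: "R v \<in> C" using RC v by auto
  have RR: "R (R v) k = R (Pn n (R v)) k + R v n * R f k" using decomp(2)[OF Rv] by simp
  show "R (R v) k = - lam * R v k"
  proof (cases "1 \<le> k \<and> k < n")
    case True
    have a: "R f n * R v k = (R f n + lam) * R v k + R (Pn n (R v)) k + (ipr n (R f) v + 2 * R v n) * R f k"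
      using fun_cong[OF E2[OF v], of k] True by (simp add: M)
    have b: "R v n * R f k = (2 * R v n + ipr n v (R f)) * R f k"
      using fun_cong[OF E3[OF v], of k] True by (simp add: M)
    show ?thesis unfolding RR using a b ipr_sym[of n v "R f"] by algebra
  next
    case False
    note F = False
    show ?thesis
    proof (cases "k = n")
      case True
      have a: "ipr n (R f) (R v) + 2 * R f n * R v n = (R f n + lam) * R v n + R (Pn n (R v)) n + (ipr n (R f) v + 2 * R v n) * R f n"
        using fun_cong[OF E2[OF v], of n] n1 by (simp add: M)
      have b: "ipr n (R v) (R f) + 2 * R v n * R f n = (2 * R v n + ipr n v (R f)) * R f n"
        using fun_cong[OF E3[OF v], of n] n1 by (simp add: M)
      show ?thesis unfolding True using RR[unfolded True] a b ipr_sym[of n v "R f"] ipr_sym[of n "R v" "R f"] by algebra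
    next
      case False
      then have "\<not> (1 \<le> k \<and> k \<le> n)" using F by auto
      then show ?thesis unfolding RR using inC[OF RC[OF Pn_C[OF Rv]]] inC[OF RC[OF fC]] inC[OF Rv] by simp
    qed
  qed
qed


lemma K2: "R (R f) = (\<lambda>k. - lam * R f k)"
proof -
  define d where "d = R f n"
  have Rf: "R f \<in> C" using RC fC by auto
  have RR: "R (R f) k = R (Pn n (R f)) k + d * R f k" for k using decomp(2)[OF Rf] by (simp add: d_def)
  have E4a: "d * R f k = R (Pn n (R f)) k + (4 * d + 2 * lam) * R f k" if "1 \<le> k \<and> k < n" for k
    using fun_cong[OF E4, of k] that by (simp add: M d_def)
  have E4b: "ipr n (R f) (R f) + 2 * d * d = R (Pn n (R f)) n + (4 * d + 2 * lam) * d"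
    using fun_cong[OF E4, of n] n1 by (simp add: M d_def)
  show ?thesis
  proof (cases "\<exists>j. 1 \<le> j \<and> j < n \<and> R f j \<noteq> 0")
    case False
    have P0: "Pn n (R f) = (\<lambda>k. 0)"
    proof (rule ext)
      fix k show "Pn n (R f) k = 0" using False inC[OF Rf, of k] by (cases "k = n"; cases "1 \<le> k \<and> k < n") (auto simp: Pn_def)
    qed
    have I0: "ipr n (R f) (R f) = 0" unfolding ipr_def using False by (intro sum.neutral) auto
    have "2 * (d * d + lam * d) = 0" using E4b unfolding P0 Rzero I0 by algebra
    then have dd: "d * d + lam * d = 0" using two by (metis mult_eq_0_iff)
    show ?thesis
    proof (rule ext)
      fix k show "R (R f) k = - lam * R f k"
        unfolding RR P0 Rzero using False dd inC[OF Rf, of k] d_def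
        by (cases "k = n"; cases "1 \<le> k \<and> k < n") (auto simp: algebra_simps eq_neg_iff_add_eq_0)
    qed
  next
    case True
    then obtain j where j: "1 \<le> j" "j < n" "R f j \<noteq> 0" by auto
    have gam: "R u n = - ipr n u (R f)" if u: "u \<in> C" "u n = 0" for u
    proof -
      have "R u n * R f j = (2 * R u n + ipr n u (R f)) * R f j"
        using fun_cong[OF E3[OF u], of j] j by (simp add: M)
      then have "(R u n + ipr n u (R f)) * R f j = 0" by algebra
      then have "R u n + ipr n u (R f) = 0" using j by simp
      then show ?thesis by algebra
    qed
    define v where "v = (ee j :: nat \<Rightarrow> 'a)"
    have v: "v \<in> C" "v n = 0" using ee_C[of j n] j unfolding v_def by (auto simp: ee_def)
    have Rv: "R v \<in> C" using RC v by auto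
    have B: "ipr n v (R f) = R f j" unfolding v_def using j by (simp add: ipr_ee)
    have a: "ipr n (R f) (R v) + 2 * R f n * R v n = (R f n + lam) * R v n + R (Pn n (R v)) n + (ipr n (R f) v + 2 * R v n) * R f n"
      using fun_cong[OF E2[OF v], of n] n1 by (simp add: M)
    have b: "ipr n (R v) (R f) + 2 * R v n * R f n = (2 * R v n + ipr n v (R f)) * R f n"
      using fun_cong[OF E3[OF v], of n] n1 by (simp add: M)
    have c: "R (Pn n (R v)) n = - ipr n (R v) (R f)"
      using gam[OF Pn_C[OF Rv] PnV[OF Rv]] by (simp add: ipr_Pn)
    have g: "R v n = - ipr n v (R f)" using gam[OF v] .
    have "(2 * d + lam) * R f j = 0"
      using a b c g B ipr_sym[of n v "R f"] ipr_sym[of n "R v" "R f"] unfolding d_def by algebra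
    then have dl: "2 * d + lam = 0" using j by simp
    have c2: "R (Pn n (R f)) n = - ipr n (R f) (R f)"
      using gam[OF Pn_C[OF Rf] PnV[OF Rf]] by (simp add: ipr_Pn)
    have "2 * (ipr n (R f) (R f) - d * d - lam * d) = 0" using E4b c2 by algebra
    then have "ipr n (R f) (R f) - d * d - lam * d = 0" using two by (metis mult_eq_0_iff)
    then have ii: "ipr n (R f) (R f) = d * d + lam * d" by algebra
    show ?thesis
    proof (rule ext)
      fix k
      show "R (R f) k = - lam * R f k"
      proof (cases "1 \<le> k \<and> k < n")
        case True
        show ?thesis using RR[of k] E4a[OF True] dl by algebra
      next
        case False
        note F = False
        show ?thesis
        proof (cases "k = n")
          case True
          show ?thesis unfolding True using RR[of n] c2 ii d_def by algebra
        next
          case False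
          then have "\<not> (1 \<le> k \<and> k \<le> n)" using F by auto
          then show ?thesis unfolding RR using inC[OF RC[OF Pn_C[OF Rf]]] inC[OF Rf] by simp
        qed
      qed
    qed
  qed
qed

lemma K: assumes x: "x \<in> C" shows "R (R x) = (\<lambda>k. - lam * R x k)"
proof -
  have "R (R x) = R (\<lambda>k. 1 * R (Pn n x) k + x n * R f k)" using decomp(2)[OF x] by simp
  also have "\<dots> = (\<lambda>k. 1 * R (R (Pn n x)) k + x n * R (R f) k)"
    by (rule lin) (use RC Pn_C fC x in auto)
  also have "\<dots> = (\<lambda>k. - lam * (1 * R (Pn n x) k + x n * R f k))"
    unfolding K1[OF Pn_C[OF x] PnV[OF x]] K2 by (simp add: algebra_simps)
  also have "\<dots> = (\<lambda>k. - lam * R x k)" using decomp(2)[OF x] by simp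
  finally show ?thesis .
qed


lemma Radd: "x \<in> C \<Longrightarrow> y \<in> C \<Longrightarrow> R (vadd x y) = vadd (R x) (R y)"
  using RB unfolding is_RB_op_def is_linear_op_def by auto
lemma Rsc: "x \<in> C \<Longrightarrow> R (vscale c x) = vscale c (R x)"
  using RB unfolding is_RB_op_def is_linear_op_def by auto
lemma RBv: "x \<in> C \<Longrightarrow> y \<in> C \<Longrightarrow> In_mult n (R x) (R y) =
        R (vadd (vadd (In_mult n (R x) y) (In_mult n x (R y))) (vscale lam (In_mult n x y)))"
  using RB unfolding is_RB_op_def by auto

lemma vaddC: "x \<in> C \<Longrightarrow> y \<in> C \<Longrightarrow> vadd x y \<in> C"
  using lc_C[of x n y 1 1] by (simp add: vadd_def)
lemma vscC: "x \<in> C \<Longrightarrow> vscale c x \<in> C"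
  using sc_C[of x n c] by (simp add: vscale_def)
lemma vzC: "vzero \<in> C" by (rule inCI) (simp add: vzero_def)
lemma Rvz: "R vzero = vzero" using Rzero by (simp add: vzero_def)

lemma mult_l: "In_mult n (vscale a x) y = vscale a (In_mult n x y)"
  unfolding In_mult_def vscale_def by (rule ext) (simp add: sum_distrib_left algebra_simps)
lemma mult_r: "In_mult n x (vscale a y) = vscale a (In_mult n x y)"
  unfolding In_mult_def vscale_def by (rule ext) (simp add: sum_distrib_left algebra_simps)
lemma mult_z1: "In_mult n vzero y = vzero" unfolding In_mult_def vzero_def by (rule ext) simp
lemma mult_z2: "In_mult n x vzero = vzero" unfolding In_mult_def vzero_def by (rule ext) simp

lemma main:
  shows "\<exists>A1 A2. is_subalgebra n A1 \<and> is_subalgebra n A2 \<and>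
           A1 \<inter> A2 = {vzero} \<and>
           (\<forall>x\<in>In_carrier n. \<exists>a1\<in>A1. \<exists>a2\<in>A2. x = vadd a1 a2) \<and>
           (\<forall>a1\<in>A1. \<forall>a2\<in>A2. R (vadd a1 a2) = vscale (- lam) a2)"
proof -
  define A1 where "A1 = {x \<in> C. R x = vzero}"
  define A2 where "A2 = {x \<in> C. R x = vscale (- lam) x}"
  have S1: "is_subalgebra n A1"
    unfolding is_subalgebra_def
  proof (intro conjI ballI allI)
    show "A1 \<subseteq> C" unfolding A1_def by auto
    show "vzero \<in> A1" unfolding A1_def using vzC Rvz by auto
    fix x y assume x: "x \<in> A1" and y: "y \<in> A1"
    then have xc: "x \<in> C" "R x = vzero" and yc: "y \<in> C" "R y = vzero" unfolding A1_def by auto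
    show "vadd x y \<in> A1" unfolding A1_def using xc yc vaddC Radd by (auto simp: vadd_def vzero_def)
    have m: "In_mult n x y \<in> C" by (rule mult_C)
    have "vzero = R (vscale lam (In_mult n x y))"
      using RBv[OF xc(1) yc(1)] unfolding xc(2) yc(2) mult_z1 mult_z2
      by (simp add: vadd_def vzero_def)
    then have "vscale lam (R (In_mult n x y)) = vzero" using Rsc[OF m] by simp
    then have "R (In_mult n x y) = vzero" using lam
      by (auto simp: vscale_def vzero_def fun_eq_iff)
    then show "In_mult n x y \<in> A1" unfolding A1_def using m by auto
  next
    fix c x assume x: "x \<in> A1"
    then show "vscale c x \<in> A1" unfolding A1_def using vscC Rsc by (auto simp: vscale_def vzero_def)
  qed
  have S2: "is_subalgebra n A2"
    unfolding is_subalgebra_def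
  proof (intro conjI ballI allI)
    show "A2 \<subseteq> C" unfolding A2_def by auto
    show "vzero \<in> A2" unfolding A2_def using vzC Rvz by (auto simp: vzero_def vscale_def)
    fix x y assume x: "x \<in> A2" and y: "y \<in> A2"
    then have xc: "x \<in> C" "R x = vscale (- lam) x" and yc: "y \<in> C" "R y = vscale (- lam) y"
      unfolding A2_def by auto
    show "vadd x y \<in> A2" unfolding A2_def using xc yc vaddC Radd by (auto simp: vadd_def vscale_def algebra_simps)
    have m: "In_mult n x y \<in> C" by (rule mult_C)
    have "vscale (- lam) (vscale (- lam) (In_mult n x y)) = R (vscale (- lam) (In_mult n x y))"
      using RBv[OF xc(1) yc(1)] unfolding xc(2) yc(2) mult_l mult_r
      by (simp add: vadd_def vscale_def algebra_simps)
    then have "vscale (- lam) (vscale (- lam) (In_mult n x y)) = vscale (- lam) (R (In_mult n x y))"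
      using Rsc[OF m] by simp
    then have "R (In_mult n x y) = vscale (- lam) (In_mult n x y)"
    proof -
      assume h: "vscale (- lam) (vscale (- lam) (In_mult n x y)) = vscale (- lam) (R (In_mult n x y))"
      show ?thesis
      proof (rule ext)
        fix k
        have "- lam * (- lam * In_mult n x y k) = - lam * R (In_mult n x y) k"
          using fun_cong[OF h, of k] by (simp add: vscale_def)
        then have "lam * (R (In_mult n x y) k + lam * In_mult n x y k) = 0" by algebra
        then have "R (In_mult n x y) k + lam * In_mult n x y k = 0" using lam by simp
        then show "R (In_mult n x y) k = vscale (- lam) (In_mult n x y) k" unfolding vscale_def by algebra
      qed
    qed
    then show "In_mult n x y \<in> A2" unfolding A2_def using m by auto
  next
    fix c x assume x: "x \<in> A2"
    then show "vscale c x \<in> A2" unfolding A2_def using vscC Rsc by (auto simp: vscale_def algebra_simps)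
  qed
  have I: "A1 \<inter> A2 = {vzero}"
  proof
    show "{vzero} \<subseteq> A1 \<inter> A2" using S1 S2 unfolding is_subalgebra_def by auto
    show "A1 \<inter> A2 \<subseteq> {vzero}"
    proof
      fix x assume "x \<in> A1 \<inter> A2"
      then have "vzero = vscale (- lam) x" unfolding A1_def A2_def by auto
      then have "x = vzero" using lam by (auto simp: vscale_def vzero_def fun_eq_iff)
      then show "x \<in> {vzero}" by simp
    qed
  qed
  have D: "\<forall>x\<in>C. \<exists>a1\<in>A1. \<exists>a2\<in>A2. x = vadd a1 a2"
  proof
    fix x :: "nat \<Rightarrow> 'a" assume x: "x \<in> C"
    have Rx: "R x \<in> C" using RC x by auto
    define a1 where "a1 = (\<lambda>k. 1 * x k + (1 / lam) * R x k)"
    define a2 where "a2 = (\<lambda>k. (- 1 / lam) * R x k)"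
    have "R a1 = (\<lambda>k. 1 * R x k + (1 / lam) * R (R x) k)" unfolding a1_def by (rule lin[OF x Rx])
    then have "R a1 = vzero" unfolding K[OF x] using lam by (simp add: vzero_def)
    then have 1: "a1 \<in> A1" unfolding A1_def a1_def using lc_C[OF x Rx, of 1 "1 / lam"] by auto
    have "R a2 = (\<lambda>k. (- 1 / lam) * R (R x) k)" unfolding a2_def by (rule lin1[OF Rx])
    then have "R a2 = vscale (- lam) a2" unfolding K[OF x] using lam by (simp add: vscale_def a2_def)
    then have 2: "a2 \<in> A2" unfolding A2_def a2_def using sc_C[OF Rx, of "- 1 / lam"] by auto
    have "x = vadd a1 a2" unfolding a1_def a2_def vadd_def by (rule ext) (simp add: diff_divide_distrib)
    then show "\<exists>a1\<in>A1. \<exists>a2\<in>A2. x = vadd a1 a2" using 1 2 by blast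
  qed
  have F: "\<forall>a1\<in>A1. \<forall>a2\<in>A2. R (vadd a1 a2) = vscale (- lam) a2"
  proof (intro ballI)
    fix a1 a2 assume "a1 \<in> A1" "a2 \<in> A2"
    then show "R (vadd a1 a2) = vscale (- lam) a2" unfolding A1_def A2_def
      using Radd by (auto simp: vadd_def vzero_def vscale_def)
  qed
  show ?thesis using S1 S2 I D F by blast
qed

end

theorem corollary1:
  fixes lam :: "'a::field" and n :: nat and R :: "(nat \<Rightarrow> 'a) \<Rightarrow> (nat \<Rightarrow> 'a)"
  assumes "(2::'a) \<noteq> 0" and "n \<ge> 1" and "lam \<noteq> 0"
    and "is_RB_op n lam R"
  shows "\<exists>A1 A2. is_subalgebra n A1 \<and> is_subalgebra n A2 \<and>
           A1 \<inter> A2 = {vzero} \<and>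
           (\<forall>x\<in>In_carrier n. \<exists>a1\<in>A1. \<exists>a2\<in>A2. x = vadd a1 a2) \<and>
           (\<forall>a1\<in>A1. \<forall>a2\<in>A2. R (vadd a1 a2) = vscale (- lam) a2)"
proof -
  interpret RBI n lam R using assms by unfold_locales
  show ?thesis by (rule main)
qed

end
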